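(* Let $\mathcal A\subset\mathbb R^d$ be a finite nonempty set, $\mathcal D=\mathrm{conv}(\mathcal A)$, and let $f$ be convex and differentiable on an open set containing the Minkowski set $\mathcal D+\mathcal D-\mathcal D=\{x+s-v: x,s,v\in\mathcal D\}$, with $C_f^{A}<\infty$. Run the away-steps Frank-Wolfe algorithm (AFW) described in the context, and let $h_t:=f(x^{(t)})-\min_{x\in\mathcal D}f(x)$. Then: (i) at every good step $t$ (i.e. $\gamma_t<\gamma_{\max}$) one has $h_{t+1}\le(1-\rho_f)h_t$ with $\rho_f:=\mu_f^{A}/(4C_f^{A})$, and $h_{t+1}\le h_t$ at every step; (ii) the number of drop steps (away steps with $\gamma_t=\gamma_{\max}$) among iterations $0,\dots,t-1$ is at most $t/2$; (iii) consequently $h_t\le h_0\exp(-\tfrac12\rho_f t)$ for all $t\ge 0$; (iv) if only $\mu_f^{A}\ge 0$ is known (general convex case), then $h_t\le \frac{4C}{k(t)+4}$ with $C=2C_f^{A}+h_0$, where $k(t)\ge t/2$ is the number of steps among iterations $0,\dots,t-1$ that are not drop steps.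
   Context: All norms and inner products are Euclidean. For $x\in\mathcal D$, let $\mathcal S_x$ be the family of subsets $S\subseteq\mathcal A$ such that $x$ is a proper convex combination of all elements of $S$ (i.e. $x=\sum_{v\in S}\alpha_v v$ with all $\alpha_v>0$, $\sum\alpha_v=1$). Curvature constant: $C_f^{A}:=\sup\{\frac{2}{\gamma^2}(f(y)-f(x)-\gamma\langle\nabla f(x),s-v\rangle): x,s,v\in\mathcal D,\ \gamma\in(0,1],\ y=x+\gamma(s-v)\}$. Geometric strong convexity: for $x\in\mathcal D$ let $s_f(x)\in\arg\min_{a\in\mathcal A}\langle\nabla f(x),a\rangle$; for $S\in\mathcal S_x$ let $v_S(x)\in\arg\max_{v\in S}\langle\nabla f(x),v\rangle$; let $v_f(x)$ be an element of $\{v_S(x):S\in\mathcal S_x\}$ minimizing $\langle\nabla f(x),\cdot\rangle$. For $x,x^*\in\mathcal D$ with $\langle\nabla f(x),x^*-x\rangle<0$ put $\gamma^{A}(x,x^* ):=\frac{\langle-\nabla f(x),x^*-x\rangle}{\langle-\nabla f(x),s_f(x)-v_f(x)\rangle}$, and $\mu_f^{A}:=\inf_{x\in\mathcal D}\inf_{x^*\in\mathcal D:\langle\nabla f(x),x^*-x\rangle<0}\frac{2}{\gamma^{A}(x,x^* )^2}\big(f(x^* )-f(x)-\langle\nabla f(x),x^*-x\rangle\big)$. AFW algorithm: start with $x^{(0)}\in\mathcal A$, $S^{(0)}=\{x^{(0)}\}$, weight $\alpha^{(0)}_{x^{(0)}}=1$. At iteration $t$, $x^{(t)}=\sum_{v\in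 S^{(t)}}\alpha^{(t)}_v v$ with $\alpha^{(t)}_v>0$ summing to 1. Let $s_t\in\arg\min_{a\in\mathcal A}\langle\nabla f(x^{(t)}),a\rangle$, $d^{FW}_t=s_t-x^{(t)}$, $v_t\in\arg\max_{v\in S^{(t)}}\langle\nabla f(x^{(t)}),v\rangle$, $d^{A}_t=x^{(t)}-v_t$. If $\langle-\nabla f(x^{(t)}),d^{FW}_t\rangle\ge\langle-\nabla f(x^{(t)}),d^{A}_t\rangle$ take $d_t=d^{FW}_t$, $\gamma_{\max}=1$ (FW step); otherwise $d_t=d^{A}_t$, $\gamma_{\max}=\alpha^{(t)}_{v_t}/(1-\alpha^{(t)}_{v_t})$ (away step). Let $\gamma_t\in\arg\min_{\gamma\in[0,\gamma_{\max}]}f(x^{(t)}+\gamma d_t)$ and $x^{(t+1)}=x^{(t)}+\gamma_t d_t$. Weights: for a FW step $\alpha^{(t+1)}_{s_t}=(1-\gamma_t)\alpha^{(t)}_{s_t}+\gamma_t$ and $\alpha^{(t+1)}_v=(1-\gamma_t)\alpha^{(t)}_v$ for $v\ne s_t$; for an away step $\alpha^{(t+1)}_{v_t}=(1+\gamma_t)\alpha^{(t)}_{v_t}-\gamma_t$ and $\alpha^{(t+1)}_v=(1+\gamma_t)\alpha^{(t)}_v$ for $v\neq v_t$ (weights of atoms not previously active are $0$). $S^{(t+1)}=\{v\in\mathcal A:\alpha^{(t+1)}_v>0\}$. A step is good if $\gamma_t<\gamma_{\max}$. *)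

theory Defs
  imports "HOL-Analysis.Analysis"
begin

definition proper_comb :: "'a::real_vector set \<Rightarrow> 'a \<Rightarrow> bool" where
  "proper_comb S x \<longleftrightarrow>
     (\<exists>\<alpha>. (\<forall>u\<in>S. \<alpha> u > 0) \<and> sum \<alpha> S = 1 \<and> (\<Sum>u\<in>S. \<alpha> u *\<^sub>R u) = x)"

definition supp_sets :: "'a::real_vector set \<Rightarrow> 'a \<Rightarrow> 'a set set" where
  "supp_sets A x = {S. S \<subseteq> A \<and> proper_comb S x}"

definition minkowski3 :: "'a::real_vector set \<Rightarrow> 'a set" where
  "minkowski3 D = {y + z - w | y z w. y \<in> D \<and> z \<in> D \<and> w \<in> D}"

definition curv_vals :: "('a::real_inner \<Rightarrow> real) \<Rightarrow> ('a \<Rightarrow> 'a) \<Rightarrow> 'a set \<Rightarrow> real set" where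
  "curv_vals f g D =
     {2 / \<gamma>^2 * (f (x + \<gamma> *\<^sub>R (s - v)) - f x - \<gamma> * (g x \<bullet> (s - v))) | x s v \<gamma>.
        x \<in> D \<and> s \<in> D \<and> v \<in> D \<and> 0 < \<gamma> \<and> \<gamma> \<le> 1}"

definition curv_const :: "('a::real_inner \<Rightarrow> real) \<Rightarrow> ('a \<Rightarrow> 'a) \<Rightarrow> 'a set \<Rightarrow> real" where
  "curv_const f g D = Sup (curv_vals f g D)"

definition fw_atom :: "('a::real_inner \<Rightarrow> 'a) \<Rightarrow> 'a set \<Rightarrow> 'a \<Rightarrow> 'a" where
  "fw_atom g A x = (SOME a. a \<in> A \<and> (\<forall>b\<in>A. g x \<bullet> a \<le> g x \<bullet> b))"

definition away_atom :: "('a::real_inner \<Rightarrow> 'a) \<Rightarrow> 'a set \<Rightarrow> 'a \<Rightarrow> 'a" where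
  "away_atom g S x = (SOME v. v \<in> S \<and> (\<forall>u\<in>S. g x \<bullet> u \<le> g x \<bullet> v))"

definition pw_away_atom :: "('a::real_inner \<Rightarrow> 'a) \<Rightarrow> 'a set \<Rightarrow> 'a \<Rightarrow> 'a" where
  "pw_away_atom g A x =
     (let V = (\<lambda>S. away_atom g S x) ` supp_sets A x
      in SOME v. v \<in> V \<and> (\<forall>u\<in>V. g x \<bullet> v \<le> g x \<bullet> u))"

definition gammaA :: "('a::real_inner \<Rightarrow> 'a) \<Rightarrow> 'a set \<Rightarrow> 'a \<Rightarrow> 'a \<Rightarrow> real" where
  "gammaA g A x xs =
     ((- g x) \<bullet> (xs - x)) / ((- g x) \<bullet> (fw_atom g A x - pw_away_atom g A x))"

definition mu_vals :: "('a::real_inner \<Rightarrow> real) \<Rightarrow> ('a \<Rightarrow> 'a) \<Rightarrow> 'a set \<Rightarrow> real set" where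
  "mu_vals f g A =
     {2 / (gammaA g A x xs)^2 * (f xs - f x - g x \<bullet> (xs - x)) | x xs.
        x \<in> convex hull A \<and> xs \<in> convex hull A \<and> g x \<bullet> (xs - x) < 0}"

definition mu_const :: "('a::real_inner \<Rightarrow> real) \<Rightarrow> ('a \<Rightarrow> 'a) \<Rightarrow> 'a set \<Rightarrow> real" where
  "mu_const f g A = Inf (mu_vals f g A)"

end

theory Submission
  imports Defs
begin


lemma grad_ineq:
  fixes f :: "'a::real_inner \<Rightarrow> real"
  assumes cvx: "convex_on U f" and U: "open U"
    and grad: "\<forall>y\<in>U. (f has_derivative (\<lambda>h. g y \<bullet> h)) (at y)"
    and a: "a \<in> U" and b: "b \<in> U"
  shows "f a + g a \<bullet> (b - a) \<le> f b"
proof -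
  define p where "p = (\<lambda>t::real. a + t *\<^sub>R (b - a))"
  define T where "T = p -` U"
  have convU: "convex U" using cvx by (simp add: convex_on_def)
  have pc: "isCont p t" for t unfolding p_def by (intro continuous_intros)
  have oT: "open T" unfolding T_def using U pc by (rule continuous_open_vimage)
  have paff: "p ((1 - u) * t1 + u * t2) = (1 - u) *\<^sub>R p t1 + u *\<^sub>R p t2" for u t1 t2
    unfolding p_def by (simp add: algebra_simps)
  have cT: "convex T"
    unfolding convex_alt T_def
  proof (intro ballI allI impI)
    fix t1 t2 and u :: real assume "t1 \<in> p -` U" "t2 \<in> p -` U" "0 \<le> u \<and> u \<le> 1"
    then show "(1 - u) *\<^sub>R t1 + u *\<^sub>R t2 \<in> p -` U"
      using convU paff[of u t1 t2] by (simp add: convex_alt)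
  qed
  have cvT: "convex_on T (f \<circ> p)"
  proof (rule convex_onI[OF _ cT])
    fix t t1 t2 :: real assume "0 < t" "t < 1" "t1 \<in> T" "t2 \<in> T"
    then show "(f \<circ> p) ((1 - t) *\<^sub>R t1 + t *\<^sub>R t2) \<le> (1 - t) * (f \<circ> p) t1 + t * (f \<circ> p) t2"
      using convex_onD[OF cvx, of t "p t1" "p t2"] paff[of t t1 t2] unfolding T_def by simp
  qed
  have T0: "0 \<in> T" "1 \<in> T" using a b by (auto simp: T_def p_def)
  have dp: "(p has_derivative (\<lambda>t. t *\<^sub>R (b - a))) (at 0)"
    unfolding p_def by (auto intro!: derivative_eq_intros)
  have "(f has_derivative (\<lambda>h. g a \<bullet> h)) (at (p 0))" using grad a by (simp add: p_def)
  from diff_chain_at[OF dp this]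
  have "((f \<circ> p) has_derivative (\<lambda>t. t * (g a \<bullet> (b - a)))) (at 0)"
    by (simp add: o_def mult.commute)
  moreover have "(\<lambda>t. t * (g a \<bullet> (b - a))) = (*) (g a \<bullet> (b - a))" by (auto simp: mult.commute)
  ultimately have "((f \<circ> p) has_field_derivative (g a \<bullet> (b - a))) (at 0 within T)"
    unfolding has_field_derivative_def by (metis has_derivative_at_withinI)
  from convex_on_imp_above_tangent[OF cvT convex_connected[OF cT] _ T0(2) this]
  have "(f \<circ> p) 1 - (f \<circ> p) 0 \<ge> g a \<bullet> (b - a) * (1 - 0)"
    using oT T0 by (simp add: interior_open)
  then show ?thesis by (simp add: p_def)
qed

lemma fin_min: "finite S \<Longrightarrow> S \<noteq> {} \<Longrightarrow> \<exists>a\<in>S. \<forall>b\<in>S. (\<phi> a::real) \<le> \<phi> b"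
proof (induction S rule: finite_ne_induct)
  case (singleton x) then show ?case by auto
next
  case (insert x F)
  then obtain a where "a \<in> F" "\<forall>b\<in>F. \<phi> a \<le> \<phi> b" by auto
  show ?case
  proof (cases "\<phi> x \<le> \<phi> a")
    case True then show ?thesis using \<open>\<forall>b\<in>F. \<phi> a \<le> \<phi> b\<close>
      by (intro bexI[of _ x]) (auto intro: order_trans)
  next
    case False then show ?thesis using \<open>\<forall>b\<in>F. \<phi> a \<le> \<phi> b\<close> \<open>a \<in> F\<close>
      by (intro bexI[of _ a]) auto
  qed
qed

lemma fin_max: "finite S \<Longrightarrow> S \<noteq> {} \<Longrightarrow> \<exists>a\<in>S. \<forall>b\<in>S. (\<phi> b::real) \<le> \<phi> a"
  using fin_min[of S "\<lambda>x. - \<phi> x"] by auto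

lemma hull_lower:
  fixes w :: "'a::real_inner"
  assumes "y \<in> convex hull S" "\<forall>a\<in>S. k \<le> w \<bullet> a" shows "k \<le> w \<bullet> y"
proof -
  have "convex hull S \<subseteq> {z. k \<le> w \<bullet> z}"
    by (rule hull_minimal) (use assms(2) convex_halfspace_ge in auto)
  then show ?thesis using assms(1) by auto
qed

lemma hull_upper:
  fixes w :: "'a::real_inner"
  assumes "y \<in> convex hull S" "\<forall>a\<in>S. w \<bullet> a \<le> k" shows "w \<bullet> y \<le> k"
proof -
  have "convex hull S \<subseteq> {z. w \<bullet> z \<le> k}"
    by (rule hull_minimal) (use assms(2) convex_halfspace_le in auto)
  then show ?thesis using assms(1) by auto
qed

lemma fw_atom_props:
  assumes "finite A" "A \<noteq> {}"
  shows "fw_atom g A y \<in> A \<and> (\<forall>b\<in>A. g y \<bullet> fw_atom g A y \<le> g y \<bullet> b)"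
proof -
  obtain a where "a \<in> A \<and> (\<forall>b\<in>A. g y \<bullet> a \<le> g y \<bullet> b)" using fin_min[OF assms, of "\<lambda>a. g y \<bullet> a"] by auto
  then show ?thesis unfolding fw_atom_def by (rule someI)
qed

lemma supp_sets_props:
  assumes "S \<in> supp_sets A y" "finite A"
  shows "S \<subseteq> A" "finite S" "S \<noteq> {}" "y \<in> convex hull S"
    "\<exists>\<alpha>. (\<forall>u\<in>S. \<alpha> u > 0) \<and> sum \<alpha> S = 1 \<and> (\<Sum>u\<in>S. \<alpha> u *\<^sub>R u) = y"
proof -
  show S: "S \<subseteq> A" using assms by (simp add: supp_sets_def)
  then show fS: "finite S" using assms finite_subset by auto
  show ex: "\<exists>\<alpha>. (\<forall>u\<in>S. \<alpha> u > 0) \<and> sum \<alpha> S = 1 \<and> (\<Sum>u\<in>S. \<alpha> u *\<^sub>R u) = y"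
    using assms by (simp add: supp_sets_def proper_comb_def)
  then show "S \<noteq> {}" by auto
  from ex show "y \<in> convex hull S" unfolding convex_hull_finite[OF fS]
    by (auto intro: less_imp_le)
qed

lemma away_atom_props:
  assumes "S \<in> supp_sets A y" "finite A"
  shows "away_atom g S y \<in> S \<and> (\<forall>u\<in>S. g y \<bullet> u \<le> g y \<bullet> away_atom g S y)"
proof -
  obtain a where "a \<in> S \<and> (\<forall>u\<in>S. g y \<bullet> u \<le> g y \<bullet> a)"
    using fin_max[of S "\<lambda>a. g y \<bullet> a"] supp_sets_props[OF assms] by auto
  then show ?thesis unfolding away_atom_def by (rule someI)
qed

lemma away_atom_ge:
  assumes "S \<in> supp_sets A y" "finite A"
  shows "g y \<bullet> y \<le> g y \<bullet> away_atom g S y"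
  using hull_upper[OF supp_sets_props(4)[OF assms]] away_atom_props[OF assms] by blast

lemma supp_sets_ne:
  assumes "finite A" "y \<in> convex hull A"
  shows "supp_sets A y \<noteq> {}"
proof -
  obtain u where u: "\<forall>x\<in>A. 0 \<le> u x" "sum u A = 1" "(\<Sum>x\<in>A. u x *\<^sub>R x) = y"
    using assms convex_hull_finite[OF assms(1)] by auto
  define S where "S = {a\<in>A. 0 < u a}"
  have z: "\<forall>i\<in>A - S. u i = 0" "\<forall>i\<in>A - S. u i *\<^sub>R i = 0" using u(1) by (auto simp: S_def)
  have "sum u S = 1" using sum.mono_neutral_left[OF assms(1) _ z(1)] u(2) by (auto simp: S_def)
  moreover have "(\<Sum>x\<in>S. u x *\<^sub>R x) = y"
    using sum.mono_neutral_left[OF assms(1) _ z(2)] u(3) by (auto simp: S_def)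
  ultimately have "S \<in> supp_sets A y" unfolding supp_sets_def proper_comb_def S_def by auto
  then show ?thesis by auto
qed

lemma pw_props:
  assumes "finite A" "y \<in> convex hull A"
  shows "\<exists>S\<in>supp_sets A y. pw_away_atom g A y = away_atom g S y"
    "\<forall>S\<in>supp_sets A y. g y \<bullet> pw_away_atom g A y \<le> g y \<bullet> away_atom g S y"
proof -
  define V where "V = (\<lambda>S. away_atom g S y) ` supp_sets A y"
  have "supp_sets A y \<subseteq> Pow A" by (auto simp: supp_sets_def)
  then have "finite (supp_sets A y)" using assms(1) finite_subset by blast
  then have "finite V" "V \<noteq> {}" using supp_sets_ne[OF assms] by (auto simp: V_def)
  then obtain a where "a \<in> V \<and> (\<forall>u\<in>V. g y \<bullet> a \<le> g y \<bullet> u)"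
    using fin_min[of V "\<lambda>a. g y \<bullet> a"] by auto
  then have "pw_away_atom g A y \<in> V \<and> (\<forall>u\<in>V. g y \<bullet> pw_away_atom g A y \<le> g y \<bullet> u)"
    unfolding pw_away_atom_def Let_def V_def[symmetric] by (rule someI)
  then show "\<exists>S\<in>supp_sets A y. pw_away_atom g A y = away_atom g S y"
    "\<forall>S\<in>supp_sets A y. g y \<bullet> pw_away_atom g A y \<le> g y \<bullet> away_atom g S y"
    by (auto simp: V_def)
qed


lemma sum_delta_scale:
  "finite A \<Longrightarrow> a \<in> A \<Longrightarrow> (\<Sum>u\<in>A. (if u = a then c else 0) *\<^sub>R u) = c *\<^sub>R (a::'a::real_vector)"
proof -
  assume "finite A" "a \<in> A"
  have "(\<Sum>u\<in>A. (if u = a then c else 0) *\<^sub>R u) = (\<Sum>u\<in>A. if u = a then c *\<^sub>R a else 0)"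
    by (rule sum.cong) auto
  then show ?thesis using \<open>finite A\<close> \<open>a \<in> A\<close> by (simp add: sum.delta)
qed

lemma alg1: "0 < (K::real) \<Longrightarrow> 0 < q \<Longrightarrow> 4 * K / q - (4 * K / q)^2 / (2 * K) = 4 * K * (q - 2) / q^2"
  by (simp add: field_simps power2_eq_square)

locale afw =
  fixes A :: "'a::euclidean_space set" and f :: "'a \<Rightarrow> real" and g :: "'a \<Rightarrow> 'a"
    and U :: "'a set"
    and x s v d :: "nat \<Rightarrow> 'a" and \<alpha> :: "nat \<Rightarrow> 'a \<Rightarrow> real"
    and \<gamma> \<gamma>max :: "nat \<Rightarrow> real" and fw :: "nat \<Rightarrow> bool"
  assumes finA: "finite A" and neA: "A \<noteq> {}"
    and U: "open U" "minkowski3 (convex hull A) \<subseteq> U"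
    and cvx: "convex_on U f"
    and grad: "\<forall>y\<in>U. (f has_derivative (\<lambda>h. g y \<bullet> h)) (at y)"
    and Cfin: "bdd_above (curv_vals f g (convex hull A))"
    and init: "x 0 \<in> A" "\<alpha> 0 = (\<lambda>u. if u = x 0 then 1 else 0)"
    and s_def: "\<forall>t. s t \<in> A \<and> (\<forall>a\<in>A. g (x t) \<bullet> s t \<le> g (x t) \<bullet> a)"
    and v_def: "\<forall>t. \<alpha> t (v t) > 0 \<and> (\<forall>u. \<alpha> t u > 0 \<longrightarrow> g (x t) \<bullet> u \<le> g (x t) \<bullet> v t)"
    and fw_def: "\<forall>t. fw t \<longleftrightarrow> (- g (x t)) \<bullet> (s t - x t) \<ge> (- g (x t)) \<bullet> (x t - v t)"
    and d_def: "\<forall>t. d t = (if fw t then s t - x t else x t - v t)"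
    and gmax_def: "\<forall>t. \<gamma>max t = (if fw t then 1 else \<alpha> t (v t) / (1 - \<alpha> t (v t)))"
    and linesearch: "\<forall>t. 0 \<le> \<gamma> t \<and> \<gamma> t \<le> \<gamma>max t \<and>
                 (\<forall>c. 0 \<le> c \<and> c \<le> \<gamma>max t \<longrightarrow> f (x t + \<gamma> t *\<^sub>R d t) \<le> f (x t + c *\<^sub>R d t))"
    and step: "\<forall>t. x (Suc t) = x t + \<gamma> t *\<^sub>R d t"
    and weights: "\<forall>t. \<alpha> (Suc t) =
       (if fw t then (\<lambda>u. (1 - \<gamma> t) * \<alpha> t u + (if u = s t then \<gamma> t else 0))
        else (\<lambda>u. (1 + \<gamma> t) * \<alpha> t u - (if u = v t then \<gamma> t else 0)))"
begin

abbreviation "D \<equiv> convex hull A"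

lemma mink: "a \<in> D \<Longrightarrow> b \<in> D \<Longrightarrow> c \<in> D \<Longrightarrow> a + b - c \<in> U"
  using U(2) unfolding minkowski3_def by blast

lemma D_U: "y \<in> D \<Longrightarrow> y \<in> U"
  using mink[of y y y] by simp

lemma A_D: "a \<in> A \<Longrightarrow> a \<in> D"
  by (simp add: hull_inc)

lemma inv: "(\<forall>u. 0 \<le> \<alpha> t u) \<and> (\<forall>u. u \<notin> A \<longrightarrow> \<alpha> t u = 0) \<and> sum (\<alpha> t) A = 1
            \<and> (\<Sum>u\<in>A. \<alpha> t u *\<^sub>R u) = x t"
proof (induction t)
  case 0
  have "(\<Sum>u\<in>A. \<alpha> 0 u *\<^sub>R u) = (\<Sum>u\<in>A. if u = x 0 then u else 0)"
    using init by (intro sum.cong) auto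
  then show ?case using init finA by (auto simp: sum.delta)
next
  case (Suc t)
  then have nn: "\<forall>u. 0 \<le> \<alpha> t u" and out: "\<forall>u. u \<notin> A \<longrightarrow> \<alpha> t u = 0"
    and sm: "sum (\<alpha> t) A = 1" and ws: "(\<Sum>u\<in>A. \<alpha> t u *\<^sub>R u) = x t" by auto
  have vA: "v t \<in> A"
  proof (rule ccontr)
    assume "v t \<notin> A" then have "\<alpha> t (v t) = 0" using out by auto
    then show False using v_def by (metis less_irrefl)
  qed
  have sA: "s t \<in> A" using s_def by auto
  have ls: "0 \<le> \<gamma> t" "\<gamma> t \<le> \<gamma>max t" using linesearch by auto
  show ?case
  proof (cases "fw t")
    case True
    then have g1: "\<gamma> t \<le> 1" using ls gmax_def by auto
    have a': "\<alpha> (Suc t) = (\<lambda>u. (1 - \<gamma> t) * \<alpha> t u + (if u = s t then \<gamma> t else 0))"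
      using weights True by auto
    have "sum (\<alpha> (Suc t)) A = (1 - \<gamma> t) * sum (\<alpha> t) A + \<gamma> t"
      unfolding a' using sA finA by (simp add: sum.distrib sum_distrib_left)
    moreover have "(\<Sum>u\<in>A. \<alpha> (Suc t) u *\<^sub>R u) = (\<Sum>u\<in>A. ((1 - \<gamma> t) * \<alpha> t u) *\<^sub>R u) + (\<Sum>u\<in>A. (if u = s t then \<gamma> t else 0) *\<^sub>R u)"
      unfolding a' by (simp add: scaleR_add_left sum.distrib)
    moreover have "\<dots> = (1 - \<gamma> t) *\<^sub>R (\<Sum>u\<in>A. \<alpha> t u *\<^sub>R u) + \<gamma> t *\<^sub>R s t"
      by (simp add: sum_delta_scale sA finA scaleR_sum_right)
    moreover have "x (Suc t) = (1 - \<gamma> t) *\<^sub>R x t + \<gamma> t *\<^sub>R s t"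
      using step d_def True by (simp add: algebra_simps)
    ultimately show ?thesis using nn out sm ws ls g1 sA unfolding a'
      by (auto intro!: add_nonneg_nonneg mult_nonneg_nonneg)
  next
    case False
    have a': "\<alpha> (Suc t) = (\<lambda>u. (1 + \<gamma> t) * \<alpha> t u - (if u = v t then \<gamma> t else 0))"
      using weights False by auto
    have av_le: "\<alpha> t (v t) \<le> 1"
      using member_le_sum[of "v t" A "\<alpha> t"] vA nn sm finA by auto
    have av_lt: "\<alpha> t (v t) < 1"
    proof (rule ccontr)
      assume "\<not> \<alpha> t (v t) < 1"
      then have a1: "\<alpha> t (v t) = 1" using av_le by auto
      have "sum (\<alpha> t) A = \<alpha> t (v t) + sum (\<alpha> t) (A - {v t})"
        using finA vA by (simp add: sum.remove)
      then have "sum (\<alpha> t) (A - {v t}) = 0" using a1 sm by simp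
      then have z: "\<forall>u\<in>A - {v t}. \<alpha> t u = 0"
        using sum_nonneg_eq_0_iff[of "A - {v t}" "\<alpha> t"] finA nn by auto
      have "x t = (\<Sum>u\<in>A. \<alpha> t u *\<^sub>R u)" using ws by simp
      also have "\<dots> = \<alpha> t (v t) *\<^sub>R v t + (\<Sum>u\<in>A - {v t}. \<alpha> t u *\<^sub>R u)"
        using finA vA by (simp add: sum.remove)
      also have "\<dots> = v t" using z a1 by simp
      finally have "x t = v t" .
      moreover have "g (x t) \<bullet> s t \<le> g (x t) \<bullet> v t" using s_def vA by auto
      ultimately have "fw t" using fw_def by (auto simp: inner_diff_right)
      then show False using False by simp
    qed
    have gm: "\<gamma>max t = \<alpha> t (v t) / (1 - \<alpha> t (v t))" using gmax_def False by auto
    have "\<gamma> t * (1 - \<alpha> t (v t)) \<le> \<alpha> t (v t)"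
      using ls(2) gm av_lt by (simp add: pos_le_divide_eq)
    then have nnv: "0 \<le> (1 + \<gamma> t) * \<alpha> t (v t) - \<gamma> t" by (simp add: algebra_simps)
    have "sum (\<alpha> (Suc t)) A = (1 + \<gamma> t) * sum (\<alpha> t) A - \<gamma> t"
      unfolding a' using vA finA by (simp add: sum_subtractf sum_distrib_left)
    moreover have "(\<Sum>u\<in>A. \<alpha> (Suc t) u *\<^sub>R u) = (\<Sum>u\<in>A. ((1 + \<gamma> t) * \<alpha> t u) *\<^sub>R u) - (\<Sum>u\<in>A. (if u = v t then \<gamma> t else 0) *\<^sub>R u)"
      unfolding a' by (simp add: scaleR_diff_left sum_subtractf)
    moreover have "\<dots> = (1 + \<gamma> t) *\<^sub>R (\<Sum>u\<in>A. \<alpha> t u *\<^sub>R u) - \<gamma> t *\<^sub>R v t"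
      by (simp add: sum_delta_scale vA finA scaleR_sum_right)
    moreover have "x (Suc t) = (1 + \<gamma> t) *\<^sub>R x t - \<gamma> t *\<^sub>R v t"
      using step d_def False by (simp add: algebra_simps)
    moreover have "\<forall>u. 0 \<le> \<alpha> (Suc t) u"
      unfolding a' using nn nnv ls by auto
    ultimately show ?thesis using out sm ws vA unfolding a' by auto
  qed
qed

lemma xD: "x t \<in> D"
  using inv[of t] finA unfolding convex_hull_finite[OF finA] by blast

definition "St t = {u. 0 < \<alpha> t u}"

lemma St_sub: "St t \<subseteq> A" using inv[of t] by (force simp: St_def)

lemma St_fin: "finite (St t)" using St_sub finA finite_subset by blast

lemma St_supp: "St t \<in> supp_sets A (x t)"
proof -
  have z: "\<forall>i\<in>A - St t. \<alpha> t i = 0" "\<forall>i\<in>A - St t. \<alpha> t i *\<^sub>R i = 0"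
    using inv[of t] by (auto simp: St_def intro: antisym)
  have "sum (\<alpha> t) (St t) = 1" using sum.mono_neutral_left[OF finA St_sub z(1)] inv[of t] by simp
  moreover have "(\<Sum>u\<in>St t. \<alpha> t u *\<^sub>R u) = x t"
    using sum.mono_neutral_left[OF finA St_sub z(2)] inv[of t] by simp
  ultimately show ?thesis using St_sub unfolding supp_sets_def proper_comb_def
    by (auto simp: St_def)
qed

lemma vSt: "v t \<in> St t" using v_def by (auto simp: St_def)


lemma nn: "0 \<le> \<alpha> t u" using inv[of t] by auto

lemma av_lt: assumes "\<not> fw t" shows "\<alpha> t (v t) < 1"
proof -
  have nn: "\<forall>u. 0 \<le> \<alpha> t u" and out: "\<forall>u. u \<notin> A \<longrightarrow> \<alpha> t u = 0"
    and sm: "sum (\<alpha> t) A = 1" and ws: "(\<Sum>u\<in>A. \<alpha> t u *\<^sub>R u) = x t" using inv[of t] by auto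
  have vA: "v t \<in> A" using vSt St_sub by auto
  have av_le: "\<alpha> t (v t) \<le> 1"
    using member_le_sum[of "v t" A "\<alpha> t"] vA nn sm finA by auto
  show "\<alpha> t (v t) < 1"
  proof (rule ccontr)
    assume "\<not> \<alpha> t (v t) < 1"
    then have a1: "\<alpha> t (v t) = 1" using av_le by auto
    have "sum (\<alpha> t) A = \<alpha> t (v t) + sum (\<alpha> t) (A - {v t})"
      using finA vA by (simp add: sum.remove)
    then have "sum (\<alpha> t) (A - {v t}) = 0" using a1 sm by simp
    then have z: "\<forall>u\<in>A - {v t}. \<alpha> t u = 0"
      using sum_nonneg_eq_0_iff[of "A - {v t}" "\<alpha> t"] finA nn by auto
    have "x t = (\<Sum>u\<in>A. \<alpha> t u *\<^sub>R u)" using ws by simp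
    also have "\<dots> = \<alpha> t (v t) *\<^sub>R v t + (\<Sum>u\<in>A - {v t}. \<alpha> t u *\<^sub>R u)"
      using finA vA by (simp add: sum.remove)
    also have "\<dots> = v t" using z a1 by simp
    finally have "x t = v t" .
    moreover have "g (x t) \<bullet> s t \<le> g (x t) \<bullet> v t" using s_def vA by auto
    ultimately have "fw t" using fw_def by (auto simp: inner_diff_right)
    then show False using assms by simp
  qed
qed

abbreviation "dropst t \<equiv> \<not> fw t \<and> \<gamma> t = \<gamma>max t"

lemma card_Suc: "card {i. i < Suc t \<and> P i} = card {i. i < t \<and> P i} + (if P t then 1 else 0)"
proof -
  have e: "{i. i < Suc t \<and> P i} = (if P t then insert t {i. i < t \<and> P i} else {i. i < t \<and> P i})"
    by (auto simp: less_Suc_eq)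
  show ?thesis unfolding e by auto
qed

lemma St_step:
  "card (St (Suc t)) + (if dropst t then 1 else 0) \<le> card (St t) + (if fw t then 1 else 0)"
proof -
  have ls: "0 \<le> \<gamma> t" "\<gamma> t \<le> \<gamma>max t" using linesearch by auto
  show ?thesis
  proof (cases "fw t")
    case True
    have "St (Suc t) \<subseteq> insert (s t) (St t)"
    proof
      fix u assume u: "u \<in> St (Suc t)"
      show "u \<in> insert (s t) (St t)"
      proof (cases "u = s t")
        case False
        then have "0 < (1 - \<gamma> t) * \<alpha> t u" using u weights True by (auto simp: St_def)
        then have "\<alpha> t u \<noteq> 0" by auto
        then show ?thesis using nn[of t u] by (auto simp: St_def)
      qed auto
    qed
    then have "card (St (Suc t)) \<le> card (insert (s t) (St t))" using St_fin by (intro card_mono) auto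
    also have "\<dots> \<le> card (St t) + 1" using St_fin by (simp add: card_insert_if)
    finally show ?thesis using True by simp
  next
    case False
    have a': "\<alpha> (Suc t) = (\<lambda>u. (1 + \<gamma> t) * \<alpha> t u - (if u = v t then \<gamma> t else 0))"
      using weights False by auto
    have sub: "St (Suc t) - {v t} \<subseteq> St t - {v t}"
    proof
      fix u assume u: "u \<in> St (Suc t) - {v t}"
      then have "0 < (1 + \<gamma> t) * \<alpha> t u" using a' by (auto simp: St_def)
      then have "\<alpha> t u \<noteq> 0" by auto
      then show "u \<in> St t - {v t}" using nn[of t u] u by (auto simp: St_def)
    qed
    show ?thesis
    proof (cases "\<gamma> t = \<gamma>max t")
      case True
      have gm: "\<gamma>max t = \<alpha> t (v t) / (1 - \<alpha> t (v t))" using gmax_def False by auto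
      have "\<alpha> (Suc t) (v t) = 0"
        using a' True gm av_lt[OF False] by (simp add: field_simps)
      then have "St (Suc t) \<subseteq> St t - {v t}" using sub by (auto simp: St_def)
      then have "card (St (Suc t)) \<le> card (St t - {v t})" using St_fin by (intro card_mono) auto
      also have "\<dots> = card (St t) - 1" using vSt St_fin by simp
      finally show ?thesis using False True card_gt_0_iff[of "St t"] vSt St_fin by auto
    next
      case False2: False
      have "St (Suc t) \<subseteq> St t" using sub vSt by auto
      then have "card (St (Suc t)) \<le> card (St t)" using St_fin by (intro card_mono) auto
      then show ?thesis using False False2 by auto
    qed
  qed
qed

lemma count_aux: "card (St t) + card {i. i < t \<and> dropst i} \<le> 1 + card {i. i < t \<and> fw i}"
proof (induction t)
  case 0
  have "St 0 = {x 0}" using init by (auto simp: St_def)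
  then show ?case by simp
next
  case (Suc t)
  then show ?case using St_step[of t] card_Suc[of t dropst] card_Suc[of t fw] by auto
qed

lemma drops: "2 * card {i. i < t \<and> dropst i} \<le> t"
proof -
  have "1 \<le> card (St t)" using vSt St_fin card_gt_0_iff[of "St t"] by auto
  then have a: "card {i. i < t \<and> dropst i} \<le> card {i. i < t \<and> fw i}" using count_aux[of t] by auto
  have "card {i. i < t \<and> dropst i} + card {i. i < t \<and> fw i}
        = card ({i. i < t \<and> dropst i} \<union> {i. i < t \<and> fw i})"
    by (rule card_Un_disjoint[symmetric]) auto
  also have "\<dots> \<le> card {..<t}" by (rule card_mono) auto
  finally show ?thesis using a by simp
qed

lemma nondrops: "card {i. i < t \<and> \<not> dropst i} + card {i. i < t \<and> dropst i} = t"
proof (induction t)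
  case (Suc t)
  then show ?case using card_Suc[of t "\<lambda>i. \<not> dropst i"] card_Suc[of t dropst] by auto
qed simp

definition "Cf = curv_const f g D"

lemma curv_valsI:
  "a \<in> D \<Longrightarrow> b \<in> D \<Longrightarrow> c \<in> D \<Longrightarrow> 0 < l \<Longrightarrow> l \<le> 1 \<Longrightarrow>
   2 / l^2 * (f (a + l *\<^sub>R (b - c)) - f a - l * (g a \<bullet> (b - c))) \<in> curv_vals f g D"
  unfolding curv_vals_def by blast

lemma curv_bound:
  assumes "a \<in> D" "b \<in> D" "c \<in> D" "0 < l" "l \<le> 1"
  shows "f (a + l *\<^sub>R (b - c)) \<le> f a + l * (g a \<bullet> (b - c)) + l^2 * Cf / 2"
proof -
  have "2 / l^2 * (f (a + l *\<^sub>R (b - c)) - f a - l * (g a \<bullet> (b - c))) \<in> curv_vals f g D"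
    unfolding curv_vals_def using assms by blast
  then have "2 / l^2 * (f (a + l *\<^sub>R (b - c)) - f a - l * (g a \<bullet> (b - c))) \<le> Cf"
    unfolding Cf_def curv_const_def by (rule cSup_upper[OF _ Cfin])
  then show ?thesis using assms(4) by (simp add: field_simps)
qed

lemma Cf_nonneg: "0 \<le> Cf"
proof -
  have "2 / 1^2 * (f (x 0 + 1 *\<^sub>R (x 0 - x 0)) - f (x 0) - 1 * (g (x 0) \<bullet> (x 0 - x 0))) \<in> curv_vals f g D"
    using curv_valsI[of "x 0" "x 0" "x 0" 1] A_D[OF init(1)] by simp
  then have "2 / 1^2 * (f (x 0 + 1 *\<^sub>R (x 0 - x 0)) - f (x 0) - 1 * (g (x 0) \<bullet> (x 0 - x 0))) \<le> Cf"
    unfolding Cf_def curv_const_def by (rule cSup_upper[OF _ Cfin])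
  then show ?thesis by simp
qed

definition "G t = (- g (x t)) \<bullet> d t"

lemma mono_step: "f (x (Suc t)) \<le> f (x t)"
proof -
  have h: "0 \<le> \<gamma> t \<and> \<gamma> t \<le> \<gamma>max t \<and> (\<forall>c. 0 \<le> c \<and> c \<le> \<gamma>max t \<longrightarrow> f (x t + \<gamma> t *\<^sub>R d t) \<le> f (x t + c *\<^sub>R d t))"
    using linesearch by blast
  then have "0 \<le> \<gamma>max t" by linarith
  then have "f (x t + \<gamma> t *\<^sub>R d t) \<le> f (x t + 0 *\<^sub>R d t)" using h by blast
  then show ?thesis using step by simp
qed

lemma descent:
  assumes nd: "\<not> dropst t" and c: "0 \<le> c" "c \<le> 1"
  shows "f (x (Suc t)) \<le> f (x t) - c * G t + c^2 * Cf / 2"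
proof (cases "c = 0")
  case True then show ?thesis using mono_step by simp
next
  case False
  then have c0: "0 < c" using c by auto
  have ls: "0 \<le> \<gamma> t" "\<gamma> t \<le> \<gamma>max t"
    "\<And>c. 0 \<le> c \<Longrightarrow> c \<le> \<gamma>max t \<Longrightarrow> f (x t + \<gamma> t *\<^sub>R d t) \<le> f (x t + c *\<^sub>R d t)"
    using linesearch by auto
  have xt: "x t \<in> D" by (rule xD)
  have sD: "s t \<in> D" using s_def A_D by auto
  have vD: "v t \<in> D" using vSt St_sub A_D by auto
  have cb: "f (x t + c *\<^sub>R d t) \<le> f (x t) - c * G t + c^2 * Cf / 2"
  proof (cases "fw t")
    case True
    have "f (x t + c *\<^sub>R (s t - x t)) \<le> f (x t) + c * (g (x t) \<bullet> (s t - x t)) + c^2 * Cf / 2"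
      using curv_bound[OF xt sD xt c0 c(2)] .
    then show ?thesis using True d_def by (simp add: G_def)
  next
    case False
    have "f (x t + c *\<^sub>R (x t - v t)) \<le> f (x t) + c * (g (x t) \<bullet> (x t - v t)) + c^2 * Cf / 2"
      using curv_bound[OF xt xt vD c0 c(2)] .
    then show ?thesis using False d_def by (simp add: G_def)
  qed
  have "f (x t + \<gamma> t *\<^sub>R d t) \<le> f (x t + c *\<^sub>R d t)"
  proof (cases "c \<le> \<gamma>max t")
    case True then show ?thesis using ls c by auto
  next
    case False
    then have nfw: "\<not> fw t" using gmax_def c by auto
    then have lt: "\<gamma> t < \<gamma>max t" using nd ls(2) by auto
    have gle: "\<gamma>max t < c" using False by simp
    define y where "y = (\<lambda>r. x t + r *\<^sub>R d t)"
    have dd: "d t = x t - v t" using d_def nfw by auto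
    have yU: "y r \<in> U" if "0 \<le> r" "r \<le> 1" for r
    proof -
      have "r *\<^sub>R x t + (1 - r) *\<^sub>R v t \<in> D"
        using convexD[OF convex_convex_hull xt vD, of r "1 - r"] that by auto
      from mink[OF xt this vD] show ?thesis
        by (simp add: y_def dd algebra_simps)
    qed
    define l where "l = (\<gamma>max t - \<gamma> t) / (c - \<gamma> t)"
    have l: "0 < l" "l < 1" using lt gle by (auto simp: l_def field_simps)
    have lc: "l * (c - \<gamma> t) = \<gamma>max t - \<gamma> t" unfolding l_def using lt gle by simp
    have comb: "(1 - l) * \<gamma> t + l * c = \<gamma>max t"
      using lc by (simp add: algebra_simps)
    have "(1 - l) *\<^sub>R y (\<gamma> t) + l *\<^sub>R y c = x t + ((1 - l) * \<gamma> t + l * c) *\<^sub>R d t"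
      unfolding y_def by (simp add: algebra_simps)
    then have "y (\<gamma>max t) = (1 - l) *\<^sub>R y (\<gamma> t) + l *\<^sub>R y c"
      unfolding comb by (simp add: y_def)
    then have "f (y (\<gamma>max t)) \<le> (1 - l) * f (y (\<gamma> t)) + l * f (y c)"
      using convex_onD[OF cvx, of l "y (\<gamma> t)" "y c"] l yU[of "\<gamma> t"] yU[of c] ls lt gle c
      by auto
    moreover have "f (y (\<gamma> t)) \<le> f (y (\<gamma>max t))" using ls(3)[of "\<gamma>max t"] ls by (simp add: y_def)
    ultimately have "l * f (y (\<gamma> t)) \<le> l * f (y c)" by (simp add: algebra_simps)
    then show ?thesis using l by (simp add: y_def)
  qed
  then show ?thesis using cb step by simp
qed


definition "xopt = (SOME xs. xs \<in> D \<and> (\<forall>y\<in>D. f xs \<le> f y))"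

lemma xopt: "xopt \<in> D \<and> (\<forall>y\<in>D. f xopt \<le> f y)"
proof -
  have "continuous_on D f"
    using grad D_U by (intro continuous_at_imp_continuous_on) (auto dest: has_derivative_continuous)
  moreover have "compact D" using finA by (simp add: compact_convex_hull finite_imp_compact)
  moreover have "D \<noteq> {}" using neA by simp
  ultimately have "\<exists>xs\<in>D. \<forall>y\<in>D. f xs \<le> f y" by (intro continuous_attains_inf) auto
  then obtain xs where "xs \<in> D \<and> (\<forall>y\<in>D. f xs \<le> f y)" by blast
  then show ?thesis unfolding xopt_def by (rule someI)
qed

lemma fmin_eq: "(INF y\<in>D. f y) = f xopt"
  using xopt by (intro cInf_eq_minimum) auto

definition "hh t = f (x t) - (INF y\<in>D. f y)"

lemma hh_nonneg: "0 \<le> hh t" using xopt xD[of t] by (simp add: hh_def fmin_eq)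

lemma hh_mono: "hh (Suc t) \<le> hh t" using mono_step by (simp add: hh_def)

definition "mu = mu_const f g A"

lemma mu_vals_nonneg: assumes "z \<in> mu_vals f g A" shows "0 \<le> z"
proof -
  obtain y xs where z: "z = 2 / (gammaA g A y xs)^2 * (f xs - f y - g y \<bullet> (xs - y))"
    and y: "y \<in> D" "xs \<in> D" using assms unfolding mu_vals_def by blast
  have "f y + g y \<bullet> (xs - y) \<le> f xs" using grad_ineq[OF cvx U(1) grad D_U[OF y(1)] D_U[OF y(2)]] .
  then show ?thesis unfolding z by (intro mult_nonneg_nonneg) auto
qed

lemma mu_le: "z \<in> mu_vals f g A \<Longrightarrow> mu \<le> z"
  unfolding mu_def mu_const_def
  by (rule cInf_lower) (auto intro: bdd_belowI[of _ 0] mu_vals_nonneg)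

lemma mu_nonneg: "mu_vals f g A \<noteq> {} \<Longrightarrow> 0 \<le> mu"
  unfolding mu_def mu_const_def by (rule cInf_greatest) (auto intro: mu_vals_nonneg)

abbreviation "fwa y \<equiv> fw_atom g A y"
abbreviation "pwa y \<equiv> pw_away_atom g A y"

lemma gap_bound:
  assumes "y \<in> D" "xs \<in> D"
  shows "(- g y) \<bullet> (xs - y) \<le> g y \<bullet> pwa y - g y \<bullet> fwa y"
proof -
  have "g y \<bullet> fwa y \<le> g y \<bullet> xs"
    using hull_lower[OF assms(2)] fw_atom_props[OF finA neA, of g y] by blast
  moreover obtain S where S: "S \<in> supp_sets A y" "pwa y = away_atom g S y"
    using pw_props(1)[OF finA assms(1), of g] by blast
  then have "g y \<bullet> y \<le> g y \<bullet> pwa y" using away_atom_ge[OF S(1) finA] by simp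
  ultimately show ?thesis by (simp add: inner_diff_right)
qed

lemma mu_le_C: assumes ne: "mu_vals f g A \<noteq> {}" shows "mu \<le> Cf"
proof -
  obtain y xs where y: "y \<in> D" "xs \<in> D" "g y \<bullet> (xs - y) < 0"
    using ne unfolding mu_vals_def by blast
  define r where "r = g y \<bullet> pwa y - g y \<bullet> fwa y"
  have r0: "0 < r" using gap_bound[OF y(1,2)] y(3) by (simp add: r_def)
  obtain S where S: "S \<in> supp_sets A y" "pwa y = away_atom g S y"
    using pw_props(1)[OF finA y(1), of g] by blast
  have pS: "pwa y \<in> S" using away_atom_props[OF S(1) finA] S(2) by simp
  have SA: "S \<subseteq> A" and fS: "finite S" using supp_sets_props[OF S(1) finA] by auto
  obtain \<beta> where \<beta>: "\<forall>u\<in>S. \<beta> u > 0" "sum \<beta> S = 1" "(\<Sum>u\<in>S. \<beta> u *\<^sub>R u) = y"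
    using supp_sets_props(5)[OF S(1) finA] by blast
  define a where "a = \<beta> (pwa y)"
  have a0: "0 < a" using \<beta>(1) pS by (simp add: a_def)
  have a1: "a \<le> 1" unfolding a_def using member_le_sum[of "pwa y" S \<beta>] \<beta> pS fS
    by (auto intro: less_imp_le)
  have pA: "pwa y \<in> A" using pS SA by auto
  have fA: "fwa y \<in> A" using fw_atom_props[OF finA neA] by auto
  define w where "w = y + a *\<^sub>R (fwa y - pwa y)"
  define \<beta>' where "\<beta>' = (\<lambda>b. (if b \<in> S then \<beta> b else 0) - (if b = pwa y then a else 0) + (if b = fwa y then a else 0))"
  have s1: "sum (\<lambda>b. if b \<in> S then \<beta> b else 0) A = 1"
    using sum.inter_restrict[OF finA, of \<beta> S] \<beta>(2) SA by (simp add: Int_absorb1)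
  have s2: "(\<Sum>b\<in>A. (if b \<in> S then \<beta> b else 0) *\<^sub>R b) = y"
  proof -
    have "(\<Sum>b\<in>A. (if b \<in> S then \<beta> b else 0) *\<^sub>R b) = (\<Sum>b\<in>A. if b \<in> S then \<beta> b *\<^sub>R b else 0)"
      by (rule sum.cong) auto
    also have "\<dots> = (\<Sum>b\<in>S. \<beta> b *\<^sub>R b)"
      using sum.inter_restrict[OF finA, of "\<lambda>b. \<beta> b *\<^sub>R b" S] SA by (simp add: Int_absorb1)
    finally show ?thesis using \<beta>(3) by simp
  qed
  have "w \<in> D"
    unfolding convex_hull_finite[OF finA]
  proof (intro CollectI exI conjI ballI)
    fix b assume "b \<in> A"
    show "0 \<le> \<beta>' b" unfolding \<beta>'_def using \<beta>(1) a0 pS by (auto simp: a_def intro: less_imp_le add_nonneg_nonneg)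
  next
    show "sum \<beta>' A = 1" unfolding \<beta>'_def using s1 pA fA finA
      by (simp add: sum.distrib sum_subtractf)
  next
    have "(\<Sum>b\<in>A. \<beta>' b *\<^sub>R b) = (\<Sum>b\<in>A. (if b \<in> S then \<beta> b else 0) *\<^sub>R b)
          - (\<Sum>b\<in>A. (if b = pwa y then a else 0) *\<^sub>R b) + (\<Sum>b\<in>A. (if b = fwa y then a else 0) *\<^sub>R b)"
      unfolding \<beta>'_def by (simp add: scaleR_add_left scaleR_diff_left sum.distrib sum_subtractf)
    also have "\<dots> = w" unfolding w_def s2 sum_delta_scale[OF finA pA] sum_delta_scale[OF finA fA]
      by (simp add: algebra_simps)
    finally show "(\<Sum>b\<in>A. \<beta>' b *\<^sub>R b) = w" .
  qed
  have gw: "g y \<bullet> (w - y) = - (a * r)" unfolding w_def r_def by (simp add: inner_diff_right algebra_simps)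
  have n1: "(- g y) \<bullet> (w - y) = a * r" using gw by simp
  have n2: "(- g y) \<bullet> (fwa y - pwa y) = r" unfolding r_def by (simp add: inner_diff_right)
  have gam: "gammaA g A y w = a"
    unfolding gammaA_def n1 n2 using r0 by simp
  have "2 / (gammaA g A y w)^2 * (f w - f y - g y \<bullet> (w - y)) \<in> mu_vals f g A"
    unfolding mu_vals_def
    apply (rule CollectI, rule exI[of _ y], rule exI[of _ w])
    using y(1) \<open>w \<in> D\<close> gw r0 a0 by simp
  then have "mu \<le> 2 / a^2 * (f w - f y - g y \<bullet> (w - y))" using mu_le gam by simp
  also have "\<dots> = 2 / a^2 * (f (y + a *\<^sub>R (fwa y - pwa y)) - f y - a * (g y \<bullet> (fwa y - pwa y)))"
    unfolding w_def by (simp add: inner_diff_right algebra_simps)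
  also have "\<dots> \<le> Cf"
    unfolding Cf_def curv_const_def
    by (rule cSup_upper[OF curv_valsI Cfin]) (use y(1) A_D[OF fA] A_D[OF pA] a0 a1 in auto)
  finally show ?thesis .
qed

definition "R t = g (x t) \<bullet> v t - g (x t) \<bullet> s t"
definition "FWg t = g (x t) \<bullet> x t - g (x t) \<bullet> s t"

lemma G_bounds: "FWg t \<le> G t" "R t \<le> 2 * G t"
proof -
  have "FWg t \<le> G t \<and> R t \<le> 2 * G t"
  proof (cases "fw t")
    case True then show ?thesis using fw_def d_def
      by (auto simp: G_def FWg_def R_def inner_diff_right)
  next
    case False then show ?thesis using fw_def d_def
      by (auto simp: G_def FWg_def R_def inner_diff_right)
  qed
  then show "FWg t \<le> G t" "R t \<le> 2 * G t" by auto
qed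

lemma hhx: "hh t = f (x t) - f xopt" by (simp add: hh_def fmin_eq)

lemma key:
  assumes "0 < hh t"
  shows "mu_vals f g A \<noteq> {}"
    "\<exists>e r. 0 < e \<and> e \<le> r \<and> r \<le> R t \<and> hh t \<le> e \<and> e \<le> FWg t \<and> mu * e^2 / (2 * r^2) \<le> e - hh t"
proof -
  define y where "y = x t"
  have yD: "y \<in> D" using xD by (simp add: y_def)
  have oD: "xopt \<in> D" using xopt by simp
  define e where "e = (- g y) \<bullet> (xopt - y)"
  define r where "r = g y \<bullet> pwa y - g y \<bullet> fwa y"
  have "f y + g y \<bullet> (xopt - y) \<le> f xopt"
    using grad_ineq[OF cvx U(1) grad D_U[OF yD] D_U[OF oD]] .
  then have he: "hh t \<le> e" unfolding hhx e_def y_def by simp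
  then have e0: "0 < e" using assms by simp
  have er: "e \<le> r" unfolding e_def r_def using gap_bound[OF yD oD] .
  have r0: "0 < r" using e0 er by simp
  have n1: "(- g y) \<bullet> (fwa y - pwa y) = r" unfolding r_def by (simp add: inner_diff_right)
  have gam: "gammaA g A y xopt = e / r"
    unfolding gammaA_def n1 e_def ..
  have mem: "2 / (gammaA g A y xopt)^2 * (f xopt - f y - g y \<bullet> (xopt - y)) \<in> mu_vals f g A"
    unfolding mu_vals_def
    apply (rule CollectI, rule exI[of _ y], rule exI[of _ xopt])
    using yD oD e0 by (simp add: e_def)
  then show "mu_vals f g A \<noteq> {}" by auto
  have "f xopt - f y - g y \<bullet> (xopt - y) = e - hh t" unfolding hhx e_def y_def by simp
  then have "mu \<le> 2 / (e / r)^2 * (e - hh t)" using mu_le[OF mem] gam by simp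
  also have "\<dots> = 2 * r^2 / e^2 * (e - hh t)" by (simp add: power_divide)
  finally have mb: "mu \<le> 2 * r^2 / e^2 * (e - hh t)" .
  have "mu * (e^2 / (2 * r^2)) \<le> 2 * r^2 / e^2 * (e - hh t) * (e^2 / (2 * r^2))"
    by (rule mult_right_mono[OF mb]) simp
  also have "\<dots> = e - hh t" using e0 r0 by (simp add: field_simps)
  finally have mb2: "mu * e^2 / (2 * r^2) \<le> e - hh t" by simp
  have sA: "s t \<in> A" and smin: "\<forall>a\<in>A. g y \<bullet> s t \<le> g y \<bullet> a" using s_def by (auto simp: y_def)
  have "g y \<bullet> s t \<le> g y \<bullet> xopt" using hull_lower[OF oD smin] .
  then have eF: "e \<le> FWg t" unfolding e_def FWg_def y_def by (simp add: inner_diff_right)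
  have fwp: "fwa y \<in> A \<and> (\<forall>b\<in>A. g y \<bullet> fwa y \<le> g y \<bullet> b)" using fw_atom_props[OF finA neA] .
  have f_eq: "g y \<bullet> fwa y = g y \<bullet> s t" using fwp sA smin by (auto intro: antisym)
  have aw: "away_atom g (St t) y \<in> St t \<and> (\<forall>u\<in>St t. g y \<bullet> u \<le> g y \<bullet> away_atom g (St t) y)"
    using away_atom_props[OF St_supp[of t] finA] by (simp add: y_def)
  have "g y \<bullet> away_atom g (St t) y \<le> g y \<bullet> v t" using aw v_def by (auto simp: St_def y_def)
  moreover have "g y \<bullet> pwa y \<le> g y \<bullet> away_atom g (St t) y"
    using pw_props(2)[OF finA yD, of g] St_supp[of t] by (auto simp: y_def)
  ultimately have rR: "r \<le> R t" unfolding r_def R_def using f_eq by (simp add: y_def)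
  show "\<exists>e r. 0 < e \<and> e \<le> r \<and> r \<le> R t \<and> hh t \<le> e \<and> e \<le> FWg t \<and> mu * e^2 / (2 * r^2) \<le> e - hh t"
    using e0 er rR he eF mb2 by blast
qed

lemma desc_hh:
  assumes "\<not> dropst t" "0 \<le> c" "c \<le> 1"
  shows "hh (Suc t) \<le> hh t - c * G t + c^2 * Cf / 2"
  using descent[OF assms] by (simp add: hh_def)

lemma rate:
  assumes nd: "\<not> dropst t"
  shows "hh (Suc t) \<le> (1 - mu / (4 * Cf)) * hh t"
proof (cases "hh t = 0")
  case True then show ?thesis using hh_mono[of t] by simp
next
  case False
  then have h0: "0 < hh t" using hh_nonneg[of t] by simp
  obtain e r where er: "0 < e" "e \<le> r" "r \<le> R t" "hh t \<le> e" "e \<le> FWg t"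
    "mu * e^2 / (2 * r^2) \<le> e - hh t" using key(2)[OF h0] by blast
  have mu0: "0 \<le> mu" and muC: "mu \<le> Cf" using mu_nonneg mu_le_C key(1)[OF h0] by auto
  have Gb: "FWg t \<le> G t" "R t \<le> 2 * G t" by (rule G_bounds)+
  show ?thesis
  proof (cases "Cf = 0")
    case True then show ?thesis using hh_mono[of t] by simp
  next
    case False
    then have C0: "0 < Cf" using Cf_nonneg by simp
    have hG: "hh t \<le> G t" using er Gb by simp
    show ?thesis
    proof (cases "G t \<le> Cf")
      case True
      have c01: "0 \<le> G t / Cf" "G t / Cf \<le> 1" using True C0 hG h0 by auto
      have "hh (Suc t) \<le> hh t - (G t / Cf) * G t + (G t / Cf)^2 * Cf / 2"
        by (rule desc_hh[OF nd c01])
      also have "\<dots> = hh t - (G t)^2 / (2 * Cf)" using C0 by (simp add: field_simps power2_eq_square)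
      finally have s1: "hh (Suc t) \<le> hh t - (G t)^2 / (2 * Cf)" .
      have r0: "0 < r" using er by simp
      have hb: "hh t \<le> e - mu * e^2 / (2 * r^2)" using er by simp
      have "mu * hh t \<le> mu * (e - mu * e^2 / (2 * r^2))" by (rule mult_left_mono[OF hb mu0])
      also have "\<dots> \<le> r^2 / 2"
      proof -
        have "0 \<le> (mu * e - r^2)^2 / (2 * r^2)" by simp
        moreover have "(mu * e - r^2)^2 / (2 * r^2) = r^2 / 2 - mu * (e - mu * e^2 / (2 * r^2))"
          using r0 by (simp add: field_simps power2_eq_square)
        ultimately show ?thesis by simp
      qed
      also have "\<dots> \<le> 2 * (G t)^2"
      proof -
        have "r \<le> 2 * G t" using er Gb by simp
        then have "r^2 \<le> (2 * G t)^2" using r0 by (intro power_mono) auto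
        then show ?thesis by (simp add: power2_eq_square)
      qed
      finally have "mu * hh t \<le> 2 * (G t)^2" .
      then have "mu * hh t / (4 * Cf) \<le> (G t)^2 / (2 * Cf)" using C0 by (simp add: field_simps)
      then show ?thesis using s1 by (simp add: algebra_simps)
    next
      case False
      have "hh (Suc t) \<le> hh t - 1 * G t + 1^2 * Cf / 2" by (rule desc_hh[OF nd]) auto
      then have "hh (Suc t) \<le> hh t / 2" using False hG by simp
      moreover have "mu / (4 * Cf) \<le> 1 / 4" using muC C0 by (simp add: field_simps)
      then have "(1/2) * hh t \<le> (1 - mu / (4 * Cf)) * hh t" using h0
        by (intro mult_right_mono) auto
      then have "hh t / 2 \<le> (1 - mu / (4 * Cf)) * hh t" by simp
      ultimately show ?thesis by simp
    qed
  qed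
qed

lemma hh_le0: "hh t \<le> hh 0"
  by (induction t) (auto intro: order_trans[OF hh_mono])

definition "K = 2 * Cf + hh 0"

lemma sublin:
  assumes nd: "\<not> dropst t"
  shows "hh (Suc t) \<le> hh t - (hh t)^2 / (2 * K)"
proof (cases "hh t = 0")
  case True then show ?thesis using hh_mono[of t] by simp
next
  case False
  then have h0: "0 < hh t" using hh_nonneg[of t] by simp
  obtain e r where er: "0 < e" "e \<le> r" "r \<le> R t" "hh t \<le> e" "e \<le> FWg t"
    using key(2)[OF h0] by blast
  have hG: "hh t \<le> G t" using er G_bounds(1)[of t] by simp
  have hK: "hh t \<le> K" using hh_le0[of t] Cf_nonneg by (simp add: K_def)
  then have K0: "0 < K" using h0 by simp
  define c where "c = hh t / K"
  have c01: "0 \<le> c" "c \<le> 1" using h0 hK K0 by (auto simp: c_def)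
  have "hh (Suc t) \<le> hh t - c * G t + c^2 * Cf / 2" by (rule desc_hh[OF nd c01])
  also have "\<dots> \<le> hh t - c * hh t + c^2 * (K / 2) / 2"
  proof -
    have "c * hh t \<le> c * G t" using hG c01 by (simp add: mult_left_mono)
    moreover have "c^2 * Cf \<le> c^2 * (K / 2)"
    proof -
      have "0 \<le> c^2 * hh 0" using hh_nonneg[of 0] by simp
      then show ?thesis by (simp add: K_def algebra_simps)
    qed
    ultimately show ?thesis by simp
  qed
  also have "\<dots> = hh t - (3/4) * (hh t)^2 / K" using K0 by (simp add: c_def field_simps power2_eq_square)
  also have "\<dots> \<le> hh t - (hh t)^2 / (2 * K)" using K0 by (simp add: field_simps)
  finally show ?thesis .
qed

lemma part1: "\<gamma> t < \<gamma>max t \<Longrightarrow> hh (Suc t) \<le> (1 - mu / (4 * Cf)) * hh t"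
  by (rule rate) auto

lemma rho_bounds:
  assumes "hh t > 0" shows "0 \<le> mu / (4 * Cf)" "mu / (4 * Cf) \<le> 1"
proof -
  have mu0: "0 \<le> mu" and muC: "mu \<le> Cf" using mu_nonneg mu_le_C key(1)[OF assms] by auto
  show "0 \<le> mu / (4 * Cf)" using mu0 Cf_nonneg by simp
  show "mu / (4 * Cf) \<le> 1"
  proof (cases "Cf = 0")
    case False then have "0 < Cf" using Cf_nonneg by simp
    then show ?thesis using muC mu0 by (simp add: field_simps)
  qed simp
qed

lemma part3: "hh t \<le> hh 0 * exp (- (1/2) * (mu / (4 * Cf)) * real t)"
proof (cases "\<exists>t. hh t > 0")
  case False
  then have "hh t = 0" "hh 0 = 0" using hh_nonneg by (meson antisym not_le)+
  then show ?thesis by simp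
next
  case True
  then obtain t0 where "hh t0 > 0" by blast
  define \<rho> where "\<rho> = mu / (4 * Cf)"
  have \<rho>: "0 \<le> \<rho>" "\<rho> \<le> 1" using rho_bounds[OF \<open>hh t0 > 0\<close>] by (auto simp: \<rho>_def)
  have ind: "hh t \<le> (1 - \<rho>) ^ card {i. i < t \<and> \<not> dropst i} * hh 0" for t
  proof (induction t)
    case 0 then show ?case by simp
  next
    case (Suc t)
    show ?case
    proof (cases "dropst t")
      case True then show ?thesis using Suc hh_mono[of t] card_Suc[of t "\<lambda>i. \<not> dropst i"] by simp
    next
      case False
      have "hh (Suc t) \<le> (1 - \<rho>) * hh t" using rate[OF False] by (simp add: \<rho>_def)
      also have "\<dots> \<le> (1 - \<rho>) * ((1 - \<rho>) ^ card {i. i < t \<and> \<not> dropst i} * hh 0)"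
        using Suc \<rho> by (intro mult_left_mono) auto
      finally show ?thesis using False card_Suc[of t "\<lambda>i. \<not> dropst i"] by simp
    qed
  qed
  define k where "k = card {i. i < t \<and> \<not> dropst i}"
  have kt: "real t \<le> 2 * real k" using drops[of t] nondrops[of t] unfolding k_def by linarith
  have "(1 - \<rho>) ^ k \<le> exp (- \<rho>) ^ k"
    using \<rho> exp_ge_add_one_self[of "- \<rho>"] by (intro power_mono) auto
  also have "\<dots> = exp (- \<rho> * real k)" by (simp add: exp_of_nat_mult[symmetric] mult.commute)
  also have "\<dots> \<le> exp (- (1/2) * \<rho> * real t)" using mult_left_mono[OF kt \<rho>(1)]
    by simp
  finally have "(1 - \<rho>) ^ k * hh 0 \<le> exp (- (1/2) * \<rho> * real t) * hh 0"
    using hh_nonneg[of 0] by (intro mult_right_mono) auto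
  then show ?thesis using ind[of t] unfolding k_def \<rho>_def by (simp add: mult.commute)
qed

lemma part4: "hh t \<le> 4 * K / (real (card {i. i < t \<and> \<not> dropst i}) + 4)"
proof (induction t)
  case 0 then show ?case using Cf_nonneg by (simp add: K_def)
next
  case (Suc t)
  define n where "n = real (card {i. i < t \<and> \<not> dropst i})"
  have n0: "0 \<le> n" by (simp add: n_def)
  have IH: "hh t \<le> 4 * K / (n + 4)" using Suc by (simp add: n_def)
  show ?case
  proof (cases "dropst t")
    case True then show ?thesis using IH hh_mono[of t] card_Suc[of t "\<lambda>i. \<not> dropst i"] by (simp add: n_def)
  next
    case False
    have cs: "real (card {i. i < Suc t \<and> \<not> dropst i}) = n + 1"
      using False card_Suc[of t "\<lambda>i. \<not> dropst i"] by (simp add: n_def)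
    have K0: "0 \<le> K" using Cf_nonneg hh_nonneg[of 0] by (simp add: K_def)
    show ?thesis
    proof (cases "K = 0")
      case True
      then have "hh t = 0" using hh_le0[of t] hh_nonneg[of t] Cf_nonneg hh_nonneg[of 0] by (simp add: K_def)
      then show ?thesis using hh_mono[of t] hh_nonneg[of "Suc t"] True by simp
    next
      case False2: False
      then have Kp: "0 < K" using K0 by simp
      define a where "a = 4 * K / (n + 4)"
      have ha: "hh t \<le> a" using IH by (simp add: a_def)
      have aK: "a \<le> K" using Kp n0 by (simp add: a_def field_simps)
      have h0: "0 \<le> hh t" by (rule hh_nonneg)
      have "hh (Suc t) \<le> hh t - (hh t)^2 / (2 * K)" by (rule sublin[OF False])
      also have "\<dots> \<le> a - a^2 / (2 * K)"
      proof -
        have "0 \<le> (a - hh t) * (2 * K - a - hh t)" using ha aK h0 by (intro mult_nonneg_nonneg) auto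
        then have "0 \<le> ((a - hh t) * (2 * K - a - hh t)) / (2 * K)" using Kp by simp
        moreover have "((a - hh t) * (2 * K - a - hh t)) / (2 * K) = (a - a^2 / (2 * K)) - (hh t - (hh t)^2 / (2 * K))"
          using Kp by (simp add: field_simps power2_eq_square)
        ultimately show ?thesis by simp
      qed
      also have "\<dots> \<le> 4 * K / (n + 1 + 4)"
      proof -
        have q: "0 < n + 4" using n0 by simp
        have "a - a^2 / (2 * K) = 4 * K * (n + 2) / (n + 4)^2"
          unfolding a_def alg1[OF Kp q] by simp
        also have "\<dots> \<le> 4 * K / (n + 5)"
        proof -
          have "(n + 2) * (n + 5) \<le> (n + 4)^2" using n0 by (simp add: power2_eq_square algebra_simps)
          then have "4 * K * ((n + 2) * (n + 5)) \<le> 4 * K * (n + 4)^2" using Kp by (intro mult_left_mono) auto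
          then show ?thesis using n0 by (simp add: field_simps)
        qed
        finally show ?thesis by (simp add: add.assoc)
      qed
      finally show ?thesis using cs by simp
    qed
  qed
qed
end


theorem theorem1:
  fixes A :: "'a::euclidean_space set" and f :: "'a \<Rightarrow> real" and g :: "'a \<Rightarrow> 'a"
    and U :: "'a set"
    and x s v d :: "nat \<Rightarrow> 'a" and \<alpha> :: "nat \<Rightarrow> 'a \<Rightarrow> real"
    and \<gamma> \<gamma>max :: "nat \<Rightarrow> real" and fw :: "nat \<Rightarrow> bool"
  assumes finA: "finite A" and neA: "A \<noteq> {}"
    and U: "open U" "minkowski3 (convex hull A) \<subseteq> U"
    and cvx: "convex_on U f"
    and grad: "\<forall>y\<in>U. (f has_derivative (\<lambda>h. g y \<bullet> h)) (at y)"
    and Cfin: "bdd_above (curv_vals f g (convex hull A))"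
    and init: "x 0 \<in> A" "\<alpha> 0 = (\<lambda>u. if u = x 0 then 1 else 0)"
    and s_def: "\<forall>t. s t \<in> A \<and> (\<forall>a\<in>A. g (x t) \<bullet> s t \<le> g (x t) \<bullet> a)"
    and v_def: "\<forall>t. \<alpha> t (v t) > 0 \<and> (\<forall>u. \<alpha> t u > 0 \<longrightarrow> g (x t) \<bullet> u \<le> g (x t) \<bullet> v t)"
    and fw_def: "\<forall>t. fw t \<longleftrightarrow> (- g (x t)) \<bullet> (s t - x t) \<ge> (- g (x t)) \<bullet> (x t - v t)"
    and d_def: "\<forall>t. d t = (if fw t then s t - x t else x t - v t)"
    and gmax_def: "\<forall>t. \<gamma>max t = (if fw t then 1 else \<alpha> t (v t) / (1 - \<alpha> t (v t)))"
    and linesearch: "\<forall>t. 0 \<le> \<gamma> t \<and> \<gamma> t \<le> \<gamma>max t \<and>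
                 (\<forall>c. 0 \<le> c \<and> c \<le> \<gamma>max t \<longrightarrow> f (x t + \<gamma> t *\<^sub>R d t) \<le> f (x t + c *\<^sub>R d t))"
    and step: "\<forall>t. x (Suc t) = x t + \<gamma> t *\<^sub>R d t"
    and weights: "\<forall>t. \<alpha> (Suc t) =
       (if fw t then (\<lambda>u. (1 - \<gamma> t) * \<alpha> t u + (if u = s t then \<gamma> t else 0))
        else (\<lambda>u. (1 + \<gamma> t) * \<alpha> t u - (if u = v t then \<gamma> t else 0)))"
  defines "h \<equiv> \<lambda>t. f (x t) - (INF y\<in>convex hull A. f y)"
    and "Cf \<equiv> curv_const f g (convex hull A)"
    and "\<rho> \<equiv> mu_const f g A / (4 * curv_const f g (convex hull A))"
    and "dropstep \<equiv> \<lambda>t. \<not> fw t \<and> \<gamma> t = \<gamma>max t"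
  shows "(\<forall>t. \<gamma> t < \<gamma>max t \<longrightarrow> h (Suc t) \<le> (1 - \<rho>) * h t)
       \<and> (\<forall>t. h (Suc t) \<le> h t)
       \<and> (\<forall>t. 2 * card {i. i < t \<and> dropstep i} \<le> t)
       \<and> (\<forall>t. h t \<le> h 0 * exp (- (1/2) * \<rho> * real t))
       \<and> (\<forall>t. h t \<le> 4 * (2 * Cf + h 0) / (real (card {i. i < t \<and> \<not> dropstep i}) + 4))"
  proof -
  note hdefs = h_def Cf_def \<rho>_def dropstep_def
  interpret afw A f g U x s v d \<alpha> \<gamma> \<gamma>max fw
    by (rule afw.intro) (fact assms)+
  have hh: "h = hh" by (simp add: hdefs(1) hh_def fun_eq_iff)
  have CC: "Cf = afw.Cf A f g" by (simp add: hdefs(2) afw.Cf_def[OF afw_axioms])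
  have rr: "\<rho> = mu / (4 * afw.Cf A f g)" by (simp add: hdefs(3) mu_def afw.Cf_def[OF afw_axioms])
  show ?thesis
    unfolding hh CC rr hdefs(4)
    using part1 hh_mono drops part3 part4 by (simp add: K_def)
qed

end
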